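(* Let $G=A\star_C B$ be an amalgamated free product and let $g=x_{-r}x_{-r+1}\cdots x_0\cdots x_{r-1}x_r$ be a reduced word in $G$ with $r\ge1$, where $x_i\in A\setminus C$ for all $i\equiv r\pmod 2$ and $x_i\in B\setminus C$ otherwise. Suppose $x_{-r}$ and $x_r$ are both $2$-RF rel $C$ (in $A$), and $x_0$ is $n$-RTF rel $C$ (in its factor) for some $2\le n\le\infty$. Then $g\in G\setminus B$ is $n$-RF rel $B$.
   Context: For a group $G$, subgroup $D$, and $2\le n\le\infty$: $a\in G\setminus D$ is $n$-RF rel $D$ if $a^{e_1}d_1\cdots a^{e_k}d_k\ne\mathrm{id}$ for all $k\ge1$, $e_i\in\{\pm1\}$, $d_i\in D$ such that $d_i\ne\mathrm{id}$ whenever $e_i=-e_{i+1}$ (indices mod $k$), and fewer than $n$ of the $e_i$ are $+1$ and fewer than $n$ are $-1$. $a\in G\setminus D$ is $n$-RTF rel $D$ if $ad_1ad_2\cdots ad_k\ne\mathrm{id}$ for all $d_i\in D$ and $1\le k<n$. *)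

theory Defs
  imports "HOL-Algebra.Algebra" "HOL-Library.Extended_Nat"
begin

definition mprod :: "('a, 'b) monoid_scheme \<Rightarrow> 'a list \<Rightarrow> 'a" where
  "mprod G xs = foldr (\<lambda>x acc. x \<otimes>\<^bsub>G\<^esub> acc) xs \<one>\<^bsub>G\<^esub>"

definition reduced_word :: "'a set \<Rightarrow> 'a set \<Rightarrow> 'a set \<Rightarrow> 'a list \<Rightarrow> bool" where
  "reduced_word A B C xs \<longleftrightarrow>
     (\<forall>x\<in>set xs. x \<in> (A - C) \<union> (B - C)) \<and>
     (\<forall>i. Suc i < length xs \<longrightarrow>
        \<not> ((xs!i \<in> A - C \<and> xs!Suc i \<in> A - C) \<or> (xs!i \<in> B - C \<and> xs!Suc i \<in> B - C)))"

text \<open>G is the (internal) amalgamated free product of its subgroups A and B over C: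
  A and B generate G, A \<inter> B = C, and every nonempty reduced alternating word is
  nontrivial (normal form theorem characterisation).\<close>
definition amalgamated_free_product ::
  "('a, 'b) monoid_scheme \<Rightarrow> 'a set \<Rightarrow> 'a set \<Rightarrow> 'a set \<Rightarrow> bool" where
  "amalgamated_free_product G A B C \<longleftrightarrow>
     group G \<and> subgroup A G \<and> subgroup B G \<and> A \<inter> B = C \<and>
     generate G (A \<union> B) = carrier G \<and>
     (\<forall>xs. xs \<noteq> [] \<and> reduced_word A B C xs \<longrightarrow> mprod G xs \<noteq> \<one>\<^bsub>G\<^esub>)"

text \<open>The word a^{e_1} d_1 \<cdots> a^{e_k} d_k, encoded as a list of pairs (e_i, d_i),
  where e_i = True means +1 and False means -1.\<close>
definition rf_word :: "('a, 'b) monoid_scheme \<Rightarrow> 'a \<Rightarrow> (bool \<times> 'a) list \<Rightarrow> 'a" where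
  "rf_word G a ps = mprod G (map (\<lambda>(e, d). (if e then a else inv\<^bsub>G\<^esub> a) \<otimes>\<^bsub>G\<^esub> d) ps)"

definition n_RF :: "('a, 'b) monoid_scheme \<Rightarrow> enat \<Rightarrow> 'a set \<Rightarrow> 'a \<Rightarrow> bool" where
  "n_RF G n D a \<longleftrightarrow> a \<in> carrier G - D \<and>
     (\<forall>ps. ps \<noteq> [] \<and> (\<forall>p\<in>set ps. snd p \<in> D) \<and>
        (\<forall>i<length ps. fst (ps!i) \<noteq> fst (ps!((i+1) mod length ps)) \<longrightarrow> snd (ps!i) \<noteq> \<one>\<^bsub>G\<^esub>) \<and>
        enat (length (filter fst ps)) < n \<and>
        enat (length (filter (\<lambda>p. \<not> fst p) ps)) < n
      \<longrightarrow> rf_word G a ps \<noteq> \<one>\<^bsub>G\<^esub>)"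

definition n_RTF :: "('a, 'b) monoid_scheme \<Rightarrow> enat \<Rightarrow> 'a set \<Rightarrow> 'a \<Rightarrow> bool" where
  "n_RTF G n D a \<longleftrightarrow> a \<in> carrier G - D \<and>
     (\<forall>ds. ds \<noteq> [] \<and> set ds \<subseteq> D \<and> enat (length ds) < n
        \<longrightarrow> mprod G (map (\<lambda>d. a \<otimes>\<^bsub>G\<^esub> d) ds) \<noteq> \<one>\<^bsub>G\<^esub>)"

end

theory Submission
  imports Defs
begin


definition Rel :: "'a set \<Rightarrow> 'a set \<Rightarrow> 'a set \<Rightarrow> 'a \<Rightarrow> 'a \<Rightarrow> bool" where
  "Rel A B C a b \<longleftrightarrow> \<not> ((a \<in> A - C \<and> b \<in> A - C) \<or> (a \<in> B - C \<and> b \<in> B - C))"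

lemma reduced_word_succ:
  "reduced_word A B C xs \<longleftrightarrow> (\<forall>x\<in>set xs. x \<in> (A - C) \<union> (B - C)) \<and> successively (Rel A B C) xs"
  unfolding reduced_word_def successively_conv_nth Rel_def by simp

lemma mprod_Nil [simp]: "mprod G [] = \<one>\<^bsub>G\<^esub>" by (simp add: mprod_def)
lemma mprod_Cons [simp]: "mprod G (a # xs) = a \<otimes>\<^bsub>G\<^esub> mprod G xs" by (simp add: mprod_def)

lemma mprod_upd [simp]: "mprod (G\<lparr>carrier := H\<rparr>) = mprod G"
  by (rule ext) (simp add: mprod_def)

context group begin

lemma mprod_closed [intro, simp]: "set xs \<subseteq> carrier G \<Longrightarrow> mprod G xs \<in> carrier G"
  by (induction xs) auto

lemma mprod_append: "set xs \<subseteq> carrier G \<Longrightarrow> set ys \<subseteq> carrier G \<Longrightarrow>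
   mprod G (xs @ ys) = mprod G xs \<otimes> mprod G ys"
  by (induction xs) (auto simp: m_assoc)

lemma mprod_sub: "subgroup H G \<Longrightarrow> set xs \<subseteq> H \<Longrightarrow> mprod G xs \<in> H"
  by (induction xs) (auto intro: subgroup.m_closed subgroup.one_closed)

lemma mprod_rev_inv: "set xs \<subseteq> carrier G \<Longrightarrow> mprod G (rev (map (m_inv G) xs)) = inv (mprod G xs)"
proof (induction xs)
  case (Cons a xs)
  have "set (rev (map (m_inv G) xs)) \<subseteq> carrier G" using Cons.prems by auto
  then show ?case using Cons by (simp add: mprod_append inv_mult_group)
qed simp

lemma mprod_rotate1: "set xs \<subseteq> carrier G \<Longrightarrow> set ys \<subseteq> carrier G \<Longrightarrow>
   mprod G (xs @ ys) = \<one> \<Longrightarrow> mprod G (ys @ xs) = \<one>"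
  by (simp add: mprod_append inv_comm)

lemma mprod_rotate: "set xs \<subseteq> carrier G \<Longrightarrow> mprod G xs = \<one> \<Longrightarrow> mprod G (rotate s xs) = \<one>"
  unfolding rotate_drop_take
  by (rule mprod_rotate1) (auto dest: in_set_takeD in_set_dropD)

lemma tele:
  assumes "\<And>i. i \<le> m \<Longrightarrow> p i \<in> carrier G" "\<And>i. i < m \<Longrightarrow> u i \<in> carrier G"
  shows "mprod G (map (\<lambda>i. p i \<otimes> u i) [0..<m]) \<otimes> p m = p 0 \<otimes> mprod G (map (\<lambda>i. u i \<otimes> p (Suc i)) [0..<m])"
  using assms
proof (induction m)
  case 0 then show ?case by simp
next
  case (Suc m)
  have IH: "mprod G (map (\<lambda>i. p i \<otimes> u i) [0..<m]) \<otimes> p m = p 0 \<otimes> mprod G (map (\<lambda>i. u i \<otimes> p (Suc i)) [0..<m])"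
    using Suc by auto
  have c1: "set (map (\<lambda>i. p i \<otimes> u i) [0..<m]) \<subseteq> carrier G" using Suc.prems by auto
  have c2: "set (map (\<lambda>i. u i \<otimes> p (Suc i)) [0..<m]) \<subseteq> carrier G" using Suc.prems by auto
  have pm: "p m \<in> carrier G" "u m \<in> carrier G" "p (Suc m) \<in> carrier G" "p 0 \<in> carrier G" using Suc.prems by auto
  have "mprod G (map (\<lambda>i. p i \<otimes> u i) [0..<Suc m]) \<otimes> p (Suc m)
     = (mprod G (map (\<lambda>i. p i \<otimes> u i) [0..<m]) \<otimes> p m) \<otimes> (u m \<otimes> p (Suc m))"
    using c1 pm by (simp add: mprod_append m_assoc)
  also have "\<dots> = p 0 \<otimes> (mprod G (map (\<lambda>i. u i \<otimes> p (Suc i)) [0..<m]) \<otimes> (u m \<otimes> p (Suc m)))"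
    using IH c2 pm by (simp add: m_assoc)
  also have "\<dots> = p 0 \<otimes> mprod G (map (\<lambda>i. u i \<otimes> p (Suc i)) [0..<Suc m])"
    using c2 pm by (simp add: mprod_append)
  finally show ?case .
qed

lemma shift_key: "a \<in> carrier G \<Longrightarrow> f ` set xs \<subseteq> carrier G \<Longrightarrow>
  a \<otimes> mprod G (map (\<lambda>d. f d \<otimes> a) xs) = mprod G (map (\<lambda>d. a \<otimes> f d) xs) \<otimes> a"
proof (induction xs)
  case Nil then show ?case by simp
next
  case (Cons d xs)
  have c: "set (map (\<lambda>d. f d \<otimes> a) xs) \<subseteq> carrier G" "set (map (\<lambda>d. a \<otimes> f d) xs) \<subseteq> carrier G"
    using Cons.prems by auto
  have "a \<otimes> mprod G (map (\<lambda>d. f d \<otimes> a) (d # xs)) = (a \<otimes> f d) \<otimes> (a \<otimes> mprod G (map (\<lambda>d. f d \<otimes> a) xs))"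
    using Cons.prems c by (simp add: m_assoc)
  also have "\<dots> = (a \<otimes> f d) \<otimes> (mprod G (map (\<lambda>d. a \<otimes> f d) xs) \<otimes> a)"
    using Cons by simp
  finally show ?case using Cons.prems c by (simp add: m_assoc)
qed

lemma shift_lemma:
  assumes a: "a \<in> carrier G" and f: "f ` set (d # xs) \<subseteq> carrier G"
    and h: "mprod G (map (\<lambda>d. f d \<otimes> a) (d # xs)) = \<one>"
  shows "mprod G (map (\<lambda>d. a \<otimes> f d) (xs @ [d])) = \<one>"
proof -
  define M where "M = mprod G (map (\<lambda>d. a \<otimes> f d) xs)"
  define N where "N = mprod G (map (\<lambda>d. f d \<otimes> a) xs)"
  have c: "set (map (\<lambda>d. f d \<otimes> a) xs) \<subseteq> carrier G" "set (map (\<lambda>d. a \<otimes> f d) xs) \<subseteq> carrier G" "f d \<in> carrier G"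
    using a f by (auto simp: image_subset_iff)
  have MN: "M \<in> carrier G" "N \<in> carrier G" unfolding M_def N_def using c by auto
  have k: "a \<otimes> N = M \<otimes> a" unfolding M_def N_def using shift_key[of a f xs] a f by simp
  have "(f d \<otimes> a) \<otimes> N = \<one>" using h unfolding N_def by simp
  then have "f d \<otimes> (a \<otimes> N) = \<one>" using MN c a by (simp add: m_assoc)
  then have "f d \<otimes> (M \<otimes> a) = \<one>" using k by simp
  then have "(M \<otimes> a) \<otimes> f d = \<one>" using inv_comm[of "f d" "M \<otimes> a"] MN c a by auto
  then have "M \<otimes> (a \<otimes> f d) = \<one>" using MN c a by (simp add: m_assoc)
  moreover have "mprod G (map (\<lambda>d. a \<otimes> f d) (xs @ [d])) = M \<otimes> (a \<otimes> f d)"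
    unfolding M_def using c a by (simp add: mprod_append)
  ultimately show ?thesis by simp
qed

end


locale afp_ctx = group G for G (structure) +
  fixes A B C :: "'a set"
  assumes afp: "amalgamated_free_product G A B C"
begin

lemma sgA: "subgroup A G" and sgB: "subgroup B G" and AB: "A \<inter> B = C"
  and gen_ne: "\<And>xs. xs \<noteq> [] \<Longrightarrow> reduced_word A B C xs \<Longrightarrow> mprod G xs \<noteq> \<one>"
  using afp unfolding amalgamated_free_product_def by auto

lemma sgC: "subgroup C G" using subgroups_Inter_pair[OF sgA sgB] AB by simp

definition fac :: "bool \<Rightarrow> 'a set" where "fac s = (if s then A else B)"

lemma fac_sg: "subgroup (fac s) G" by (simp add: fac_def sgA sgB)
lemma C_fac: "C \<subseteq> fac s" using AB by (auto simp: fac_def)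
lemma fac_carrier: "fac s \<subseteq> carrier G" using fac_sg subgroup.subset by blast
lemma C_carrier: "C \<subseteq> carrier G" using sgC subgroup.subset by blast

lemma inv_mem_iff: "subgroup H G \<Longrightarrow> y \<in> carrier G \<Longrightarrow> inv y \<in> H \<longleftrightarrow> y \<in> H"
  by (metis inv_inv subgroup.m_inv_closed)

lemma fac_inv: "u \<in> fac s - C \<Longrightarrow> inv u \<in> fac s - C"
  using inv_mem_iff[OF fac_sg] inv_mem_iff[OF sgC] fac_carrier by blast

lemma fac_disj: "a \<in> fac s - C \<Longrightarrow> a \<notin> fac (\<not> s) - C"
  using AB by (auto simp: fac_def)

lemma fac_AB: "fac s - C \<subseteq> (A - C) \<union> (B - C)" by (auto simp: fac_def)

lemma red_carrier: "reduced_word A B C w \<Longrightarrow> set w \<subseteq> carrier G"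
  unfolding reduced_word_def using sgA sgB subgroup.subset by blast

definition RW :: "bool \<Rightarrow> bool \<Rightarrow> 'a \<Rightarrow> bool" where
  "RW s t z \<longleftrightarrow> (\<exists>w. w \<noteq> [] \<and> reduced_word A B C w \<and> hd w \<in> fac s - C \<and> last w \<in> fac t - C \<and> mprod G w = z)"

lemma RW_ne1: "RW s t z \<Longrightarrow> z \<noteq> \<one>"
  unfolding RW_def using gen_ne by blast

lemma RW_carrier: "RW s t z \<Longrightarrow> z \<in> carrier G"
  unfolding RW_def using red_carrier by blast

lemma RW_single: "a \<in> fac s - C \<Longrightarrow> RW s s a"
  unfolding RW_def
  apply (rule exI[of _ "[a]"])
  using fac_AB fac_carrier by (auto simp: reduced_word_succ subset_iff)

lemma Rel_junction: "a \<in> fac t - C \<Longrightarrow> b \<in> fac (\<not> t) - C \<Longrightarrow> Rel A B C a b"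
  unfolding Rel_def using AB by (cases t) (auto simp: fac_def)

lemma RW_append: assumes "RW s t z1" "RW (\<not> t) u z2" shows "RW s u (z1 \<otimes> z2)"
proof -
  obtain w1 where w1: "w1 \<noteq> []" "reduced_word A B C w1" "hd w1 \<in> fac s - C" "last w1 \<in> fac t - C" "mprod G w1 = z1"
    using assms(1) unfolding RW_def by blast
  obtain w2 where w2: "w2 \<noteq> []" "reduced_word A B C w2" "hd w2 \<in> fac (\<not> t) - C" "last w2 \<in> fac u - C" "mprod G w2 = z2"
    using assms(2) unfolding RW_def by blast
  have "reduced_word A B C (w1 @ w2)"
    using w1 w2 Rel_junction[OF w1(4) w2(3)] by (auto simp: reduced_word_succ successively_append_iff)
  moreover have "mprod G (w1 @ w2) = z1 \<otimes> z2"
    using w1 w2 red_carrier by (simp add: mprod_append)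
  ultimately show ?thesis unfolding RW_def using w1 w2
    by (intro exI[of _ "w1 @ w2"]) auto
qed

lemma Rel_inv: "x \<in> carrier G \<Longrightarrow> y \<in> carrier G \<Longrightarrow> Rel A B C x y \<Longrightarrow> Rel A B C (inv y) (inv x)"
  unfolding Rel_def using inv_mem_iff[OF sgA] inv_mem_iff[OF sgB] inv_mem_iff[OF sgC] by blast

lemma RW_inv: assumes "RW s t z" shows "RW t s (inv z)"
proof -
  obtain w where w: "w \<noteq> []" "reduced_word A B C w" "hd w \<in> fac s - C" "last w \<in> fac t - C" "mprod G w = z"
    using assms unfolding RW_def by blast
  have wc: "set w \<subseteq> carrier G" using red_carrier w by blast
  let ?w = "rev (map (m_inv G) w)"
  have "\<forall>x\<in>set ?w. x \<in> (A - C) \<union> (B - C)"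
  proof
    fix x assume "x \<in> set ?w"
    then obtain y where y: "y \<in> set w" "x = inv y" by auto
    then have "y \<in> (A - C) \<union> (B - C)" using w(2) unfolding reduced_word_def by blast
    then show "x \<in> (A - C) \<union> (B - C)"
      using y wc inv_mem_iff[OF sgA] inv_mem_iff[OF sgB] inv_mem_iff[OF sgC] by blast
  qed
  moreover have "successively (Rel A B C) ?w"
    unfolding successively_rev successively_map
    using w(2) wc unfolding reduced_word_succ
    by (auto elim!: successively_mono intro: Rel_inv)
  ultimately have "reduced_word A B C ?w" by (simp add: reduced_word_succ)
  moreover have "hd ?w = inv (last w)" using w(1) by (simp add: hd_rev last_map)
  moreover have "last ?w = inv (hd w)" using w(1) by (simp add: last_rev hd_map)
  moreover have "mprod G ?w = inv z" using mprod_rev_inv[OF wc] w by simp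
  ultimately show ?thesis unfolding RW_def using w fac_inv
    by (intro exI[of _ ?w]) auto
qed

lemma wrap': assumes "u \<in> fac s - C" "v \<in> fac s - C" "RW (\<not> s) (\<not> s) z"
  shows "RW s s (u \<otimes> z \<otimes> v)"
proof -
  have 1: "RW s (\<not> s) (u \<otimes> z)" using RW_append[OF RW_single[OF assms(1)] assms(3)] .
  have 2: "RW (\<not> \<not> s) s v" using RW_single[OF assms(2)] by simp
  show ?thesis using RW_append[OF 1 2] .
qed

lemma wrap: assumes "u \<in> fac s - C" "v \<in> fac s - C" "z \<in> C \<or> RW (\<not> s) (\<not> s) z"
  shows "u \<otimes> z \<otimes> v \<in> C \<or> RW s s (u \<otimes> z \<otimes> v)"
proof (cases "z \<in> C")
  case True
  have "z \<in> fac s" using True C_fac by blast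
  then have "u \<otimes> z \<otimes> v \<in> fac s"
    using assms(1,2) subgroup.m_closed[OF fac_sg] by simp
  then show ?thesis using RW_single by blast
next
  case False
  then show ?thesis using wrap'[OF assms(1,2)] assms(3) by blast
qed

end


context afp_ctx begin

definition RTFP :: "enat \<Rightarrow> 'a \<Rightarrow> bool" where
  "RTFP n a \<longleftrightarrow> (\<forall>ds. ds \<noteq> [] \<and> set ds \<subseteq> C \<and> enat (length ds) < n \<longrightarrow> mprod G (map (\<lambda>d. a \<otimes> d) ds) \<noteq> \<one>)"

lemma RTFP_inv: assumes a: "a \<in> carrier G" and r: "RTFP n a" shows "RTFP n (inv a)"
  unfolding RTFP_def
proof (intro allI impI)
  fix ds assume ds: "ds \<noteq> [] \<and> set ds \<subseteq> C \<and> enat (length ds) < n"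
  show "mprod G (map (\<lambda>d. inv a \<otimes> d) ds) \<noteq> \<one>"
  proof
    assume h: "mprod G (map (\<lambda>d. inv a \<otimes> d) ds) = \<one>"
    have dsc: "set ds \<subseteq> carrier G" using ds C_carrier by blast
    have wc: "set (map (\<lambda>d. inv a \<otimes> d) ds) \<subseteq> carrier G" using dsc a by auto
    have h0: "mprod G (rev (map (m_inv G) (map (\<lambda>d. inv a \<otimes> d) ds))) = \<one>"
      using mprod_rev_inv[OF wc] h by simp
    have eqm: "map (m_inv G) (map (\<lambda>d. inv a \<otimes> d) ds) = map (\<lambda>d. inv d \<otimes> a) ds"
    proof -
      have "\<And>d. d \<in> set ds \<Longrightarrow> inv (inv a \<otimes> d) = inv d \<otimes> a"
        using a dsc by (auto simp: inv_mult_group subset_iff)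
      then show ?thesis by simp
    qed
    have h2: "mprod G (map (\<lambda>d. inv d \<otimes> a) (rev ds)) = \<one>" using h0 unfolding eqm rev_map .
    obtain d1 rest where dr: "rev ds = d1 # rest" using ds by (cases "rev ds") auto
    have sc: "set (d1 # rest) \<subseteq> C" using ds dr by (metis set_rev)
    have "(m_inv G) ` set (d1 # rest) \<subseteq> carrier G" using sc C_carrier by auto
    then have h3: "mprod G (map (\<lambda>d. a \<otimes> inv d) (rest @ [d1])) = \<one>"
      using shift_lemma[of a "m_inv G" d1 rest] a h2 dr by simp
    let ?ds = "map (m_inv G) (rest @ [d1])"
    have ne: "?ds \<noteq> []" by simp
    have sub: "set ?ds \<subseteq> C" using sc subgroup.m_inv_closed[OF sgC] by auto
    have "length (rev ds) = length (d1 # rest)" using dr by simp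
    then have len: "length ?ds = length ds" by simp
    have eq: "map (\<lambda>d. a \<otimes> d) ?ds = map (\<lambda>d. a \<otimes> inv d) (rest @ [d1])" by simp
    have "enat (length ?ds) < n" using len ds by simp
    then have "mprod G (map (\<lambda>d. a \<otimes> d) ?ds) \<noteq> \<one>" using r ne sub unfolding RTFP_def by blast
    then show False using h3 eq by (simp add: comp_def)
  qed
qed

lemma mprod_split:
  assumes "j \<le> i" "\<And>l. l < i \<Longrightarrow> f l \<in> carrier G"
  shows "mprod G (map f [0..<i]) = mprod G (map f [0..<j]) \<otimes> mprod G (map f [j..<i])"
proof -
  have "[0..<i] = [0..<j] @ [j..<i]" using upt_add_eq_append[of 0 j "i - j"] assms(1) by simp
  moreover have c1: "set (map f [0..<j]) \<subseteq> carrier G" using assms by auto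
  moreover have c2: "set (map f [j..<i]) \<subseteq> carrier G" using assms by auto
  ultimately show ?thesis by (simp add: mprod_append)
qed

lemma core:
  fixes k :: nat and e :: "nat \<Rightarrow> bool" and J :: "nat \<Rightarrow> 'a" and y :: "bool \<Rightarrow> 'a" and sx :: bool
  assumes k: "0 < k"
    and Jc: "\<forall>i<k. J i \<in> carrier G"
    and y: "\<forall>s. y s \<in> fac sx - C"
    and rtf: "\<forall>s. RTFP n (y s)"
    and jun: "\<forall>i<k. RW (\<not> sx) (\<not> sx) (J i) \<or> (J i \<in> C \<and> (Suc i < k \<longrightarrow> e (Suc i) = e i))"
    and lst: "RW (\<not> sx) (\<not> sx) (J (k - 1))"
    and win: "\<forall>j i. j < i \<longrightarrow> i \<le> k \<longrightarrow> (\<forall>l. j \<le> l \<longrightarrow> l < i \<longrightarrow> e l = e j) \<longrightarrow> enat (i - j) < n"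
  shows "mprod G (map (\<lambda>i. y (e i) \<otimes> J i) [0..<k]) \<noteq> \<one>"
proof -
  define f where "f i = y (e i) \<otimes> J i" for i
  have yc: "y s \<in> carrier G" for s using y fac_carrier by blast
  have fc: "\<And>l. l < k \<Longrightarrow> f l \<in> carrier G" unfolding f_def using Jc yc by auto
  have inv: "\<forall>i\<le>k. \<exists>j\<le>i. (j = 0 \<or> (\<exists>s. RW s (\<not> sx) (mprod G (map f [0..<j]))))
      \<and> (\<forall>l. j \<le> l \<longrightarrow> l < i \<longrightarrow> e l = e j \<and> \<not> RW (\<not> sx) (\<not> sx) (J l))"
  proof (intro allI impI)
    fix i assume "i \<le> k"
    then show "\<exists>j\<le>i. (j = 0 \<or> (\<exists>s. RW s (\<not> sx) (mprod G (map f [0..<j]))))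
      \<and> (\<forall>l. j \<le> l \<longrightarrow> l < i \<longrightarrow> e l = e j \<and> \<not> RW (\<not> sx) (\<not> sx) (J l))"
    proof (induction i)
      case 0 then show ?case by auto
    next
      case (Suc i)
      then have ik: "i < k" by simp
      obtain j where j: "j \<le> i" "j = 0 \<or> (\<exists>s. RW s (\<not> sx) (mprod G (map f [0..<j])))"
        "\<forall>l. j \<le> l \<longrightarrow> l < i \<longrightarrow> e l = e j \<and> \<not> RW (\<not> sx) (\<not> sx) (J l)"
        using Suc.IH[OF less_imp_le[OF ik]] by blast
      have runC: "\<forall>l. j \<le> l \<longrightarrow> l < i \<longrightarrow> J l \<in> C \<and> e l = e j"
      proof (intro allI impI)
        fix l assume l: "j \<le> l" "l < i"
        then have a1: "\<not> RW (\<not> sx) (\<not> sx) (J l)" "e l = e j" using j(3) by blast+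
        have "l < k" using l ik by simp
        then have "RW (\<not> sx) (\<not> sx) (J l) \<or> (J l \<in> C \<and> (Suc l < k \<longrightarrow> e (Suc l) = e l))" using jun by simp
        then show "J l \<in> C \<and> e l = e j" using a1 by simp
      qed
      have eij: "e i = e j"
      proof (cases "i = j")
        case False
        then have "j \<le> i - 1" "i - 1 < i" using j(1) by auto
        then have a1: "\<not> RW (\<not> sx) (\<not> sx) (J (i - 1))" "e (i - 1) = e j" using j(3) by blast+
        have a2: "Suc (i - 1) < k" using ik False j(1) by simp
        have "i - 1 < k" using ik by simp
        then have "RW (\<not> sx) (\<not> sx) (J (i - 1)) \<or> (J (i - 1) \<in> C \<and> (Suc (i - 1) < k \<longrightarrow> e (Suc (i - 1)) = e (i - 1)))" using jun by simp
        then have "e (Suc (i - 1)) = e (i - 1)" using a1 a2 by simp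
        then show ?thesis using False j(1) \<open>e (i - 1) = e j\<close> by (simp add: Suc_pred')
      qed simp
      show ?case
      proof (cases "RW (\<not> sx) (\<not> sx) (J i)")
        case False
        have "\<forall>l. j \<le> l \<longrightarrow> l < Suc i \<longrightarrow> e l = e j \<and> \<not> RW (\<not> sx) (\<not> sx) (J l)"
        proof (intro allI impI)
          fix l assume l: "j \<le> l" "l < Suc i"
          show "e l = e j \<and> \<not> RW (\<not> sx) (\<not> sx) (J l)"
          proof (cases "l < i")
            case True
            then show ?thesis using j(3) l(1) by blast
          next
            case False
            then have "l = i" using l by simp
            then show ?thesis using eij \<open>\<not> RW (\<not> sx) (\<not> sx) (J i)\<close> by simp
          qed
        qed
        moreover have "j \<le> Suc i" using j(1) by simp
        ultimately show ?thesis using j(2) by blast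
      next
        case True
        define z where "z = mprod G (map f [j..<i]) \<otimes> y (e j)"
        have runE: "j \<le> l \<and> l < i" if "l \<in> set [j..<i]" for l using that by simp
        have mapf: "map f [j..<i] = map (\<lambda>d. y (e j) \<otimes> d) (map J [j..<i])"
          unfolding map_map comp_def
        proof (rule map_cong[OF refl])
          fix l assume "l \<in> set [j..<i]"
          then have "e l = e j" using runC runE by blast
          then show "f l = y (e j) \<otimes> J l" unfolding f_def by simp
        qed
        have JC: "set (map J [j..<i]) \<subseteq> C"
        proof
          fix c assume "c \<in> set (map J [j..<i])"
          then obtain l where "l \<in> set [j..<i]" "c = J l" by auto
          then show "c \<in> C" using runC runE by blast
        qed
        have fsub: "set (map f [j..<i]) \<subseteq> fac sx"
          unfolding mapf
        proof
          fix x assume "x \<in> set (map (\<lambda>d. y (e j) \<otimes> d) (map J [j..<i]))"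
          then obtain c where c: "c \<in> set (map J [j..<i])" "x = y (e j) \<otimes> c" by auto
          have "c \<in> fac sx" using c(1) JC C_fac by blast
          moreover have "y (e j) \<in> fac sx" using y by blast
          ultimately show "x \<in> fac sx" using c(2) subgroup.m_closed[OF fac_sg] by blast
        qed
        have zfac: "z \<in> fac sx" unfolding z_def
          by (rule subgroup.m_closed[OF fac_sg mprod_sub[OF fac_sg fsub]]) (use y in blast)
        have zc: "z \<in> carrier G" using zfac fac_carrier by blast
        have fjc: "set (map f [j..<i]) \<subseteq> carrier G" using fsub fac_carrier by blast
        have znC: "z \<notin> C"
        proof
          assume zC: "z \<in> C"
          define ds where "ds = map J [j..<i] @ [inv z]"
          have dsC: "set ds \<subseteq> C" unfolding ds_def using JC zC subgroup.m_inv_closed[OF sgC] by auto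
          have "mprod G (map (\<lambda>d. y (e j) \<otimes> d) ds) = mprod G (map f [j..<i]) \<otimes> (y (e j) \<otimes> inv z)"
            unfolding ds_def using fjc yc zc by (simp add: mprod_append mapf)
          also have "\<dots> = z \<otimes> inv z" using fjc yc zc by (simp add: m_assoc[symmetric] z_def[symmetric])
          also have "\<dots> = \<one>" using zc by simp
          finally have h1: "mprod G (map (\<lambda>d. y (e j) \<otimes> d) ds) = \<one>" .
          have al: "\<forall>l. j \<le> l \<longrightarrow> l < Suc i \<longrightarrow> e l = e j"
          proof (intro allI impI)
            fix l assume l: "j \<le> l" "l < Suc i"
            then have "l < i \<or> l = i" by auto
            then show "e l = e j" using runC l eij by blast
          qed
          have "j < Suc i" using j(1) by simp
          have w: "j < Suc i \<longrightarrow> Suc i \<le> k \<longrightarrow> (\<forall>l. j \<le> l \<longrightarrow> l < Suc i \<longrightarrow> e l = e j) \<longrightarrow> enat (Suc i - j) < n"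
            using win by blast
          have "enat (Suc i - j) < n" using mp[OF mp[OF mp[OF w \<open>j < Suc i\<close>] Suc.prems] al] .
          moreover have "length ds = Suc i - j" unfolding ds_def using j(1) by simp
          ultimately have "enat (length ds) < n" by simp
          moreover have "ds \<noteq> []" unfolding ds_def by simp
          moreover have "RTFP n (y (e j))" using rtf by simp
          ultimately show False using h1 dsC unfolding RTFP_def by blast
        qed
        have RWz: "RW sx (\<not> sx) (z \<otimes> J i)"
        proof -
          have "RW sx sx z" using RW_single zfac znC by blast
          from RW_append[OF this True] show ?thesis .
        qed
        have "mprod G (map f [0..<Suc i]) = mprod G (map f [0..<j]) \<otimes> mprod G (map f [j..<Suc i])"
          using mprod_split[of j "Suc i" f] j(1) fc Suc.prems by simp
        also have "mprod G (map f [j..<Suc i]) = mprod G (map f [j..<i]) \<otimes> f i"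
          using j(1) fjc fc ik by (simp add: mprod_append)
        also have "\<dots> = z \<otimes> J i"
        proof -
          have fi: "f i = y (e j) \<otimes> J i" unfolding f_def using eij by simp
          have Mc: "mprod G (map f [j..<i]) \<in> carrier G" using fjc by simp
          have "J i \<in> carrier G" using Jc ik by simp
          then show ?thesis unfolding z_def fi using Mc yc by (simp add: m_assoc)
        qed
        finally have eq: "mprod G (map f [0..<Suc i]) = mprod G (map f [0..<j]) \<otimes> (z \<otimes> J i)" .
        have "\<exists>s. RW s (\<not> sx) (mprod G (map f [0..<Suc i]))"
        proof (cases "j = 0")
          case True
          then show ?thesis using eq RWz RW_carrier by auto
        next
          case False
          then obtain s where "RW s (\<not> sx) (mprod G (map f [0..<j]))" using j(2) by blast
          moreover have "RW (\<not> \<not> sx) (\<not> sx) (z \<otimes> J i)" using RWz by simp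
          ultimately have "RW s (\<not> sx) (mprod G (map f [0..<j]) \<otimes> (z \<otimes> J i))" by (rule RW_append)
          then show ?thesis using eq by auto
        qed
        then show ?thesis by (intro exI[of _ "Suc i"]) auto
      qed
    qed
  qed
  obtain j where j: "j \<le> k" "j = 0 \<or> (\<exists>s. RW s (\<not> sx) (mprod G (map f [0..<j])))"
    "\<forall>l. j \<le> l \<longrightarrow> l < k \<longrightarrow> e l = e j \<and> \<not> RW (\<not> sx) (\<not> sx) (J l)"
    using inv by blast
  have "j = k"
  proof (rule ccontr)
    assume "j \<noteq> k"
    then have "j \<le> k - 1" "k - 1 < k" using j(1) k by auto
    then show False using j(3) lst by blast
  qed
  then obtain s where "RW s (\<not> sx) (mprod G (map f [0..<k]))" using j(2) k by auto
  then show ?thesis using RW_ne1 unfolding f_def by blast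
qed

end


locale lem_ctx = afp_ctx G A B C for G (structure) and A B C +
  fixes x :: "int \<Rightarrow> 'a" and r :: nat and n :: enat
  assumes r1: "r \<ge> 1"
    and xA: "\<And>i. - int r \<le> i \<Longrightarrow> i \<le> int r \<Longrightarrow> even (i - int r) \<Longrightarrow> x i \<in> A - C"
    and xB: "\<And>i. - int r \<le> i \<Longrightarrow> i \<le> int r \<Longrightarrow> odd (i - int r) \<Longrightarrow> x i \<in> B - C"
    and left: "n_RF (G\<lparr>carrier := A\<rparr>) 2 C (x (- int r))"
    and right: "n_RF (G\<lparr>carrier := A\<rparr>) 2 C (x (int r))"
    and n2: "2 \<le> n"
    and mid: "n_RTF (G\<lparr>carrier := (if even r then A else B)\<rparr>) n C (x 0)"
begin

lemma xside: "- int r \<le> i \<Longrightarrow> i \<le> int r \<Longrightarrow> x i \<in> fac (even (i - int r)) - C"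
  using xA xB by (auto simp: fac_def)

lemma xc: "- int r \<le> i \<Longrightarrow> i \<le> int r \<Longrightarrow> x i \<in> carrier G"
  using xside fac_carrier by blast

lemma xside_R: "d < r \<Longrightarrow> x (int r - int d) \<in> fac (even d) - C"
  using xside[of "int r - int d"] by simp

lemma xside_L: "d < r \<Longrightarrow> x (- int r + int d) \<in> fac (even d) - C"
proof -
  assume "d < r"
  then have "x (- int r + int d) \<in> fac (even (- int r + int d - int r)) - C" using xside[of "- int r + int d"] by simp
  moreover have "even (- int r + int d - int r) = even d"
    by (metis diff_conv_add_uminus even_add even_minus even_of_nat)
  ultimately show ?thesis by simp
qed

definition Rt :: "nat \<Rightarrow> 'a" where "Rt d = mprod G (map x [int r - int d + 1 .. int r])"
definition Lt :: "nat \<Rightarrow> 'a" where "Lt d = mprod G (map x [- int r .. - int r + int d - 1])"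

lemma Rt0: "Rt 0 = \<one>" by (simp add: Rt_def)
lemma Lt0: "Lt 0 = \<one>" by (simp add: Lt_def)

lemma Rt_c: "d \<le> r \<Longrightarrow> Rt d \<in> carrier G"
  unfolding Rt_def by (rule mprod_closed) (auto intro: xc)

lemma Lt_c: "d \<le> r \<Longrightarrow> Lt d \<in> carrier G"
  unfolding Lt_def by (rule mprod_closed) (auto intro: xc)

lemma Rt_Suc: "d < r \<Longrightarrow> Rt (Suc d) = x (int r - int d) \<otimes> Rt d"
proof -
  assume d: "d < r"
  have "[int r - int (Suc d) + 1 .. int r] = (int r - int d) # [int r - int d + 1 .. int r]"
    using upto_rec1[of "int r - int d" "int r"] by simp
  then show ?thesis unfolding Rt_def by simp
qed

lemma Lt_Suc: "d < r \<Longrightarrow> Lt (Suc d) = Lt d \<otimes> x (- int r + int d)"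
proof -
  assume d: "d < r"
  have "[- int r .. - int r + int (Suc d) - 1] = [- int r .. - int r + int d - 1] @ [- int r + int d]"
    using upto_rec2[of "- int r" "- int r + int d"] by simp
  moreover have "set (map x [- int r .. - int r + int d - 1]) \<subseteq> carrier G" using d by (auto intro: xc)
  moreover have "x (- int r + int d) \<in> carrier G" using d by (auto intro: xc)
  ultimately show ?thesis unfolding Lt_def by (simp add: mprod_append)
qed

lemma B_carrier: "B \<subseteq> carrier G" using sgB subgroup.subset by blast

lemma JTT: assumes b: "b \<in> B" shows "d \<le> r \<Longrightarrow> Rt d \<otimes> b \<otimes> Lt d \<in> C \<or> RW (odd d) (odd d) (Rt d \<otimes> b \<otimes> Lt d)"
proof (induction d)
  case 0
  have bc: "b \<in> carrier G" using b B_carrier by blast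
  have "b \<in> C \<or> b \<in> fac False - C" using b by (auto simp: fac_def)
  then have "b \<in> C \<or> RW False False b" using RW_single by blast
  then show ?case using bc by (simp add: Rt0 Lt0)
next
  case (Suc d)
  then have d: "d < r" by simp
  have IH: "Rt d \<otimes> b \<otimes> Lt d \<in> C \<or> RW (\<not> even d) (\<not> even d) (Rt d \<otimes> b \<otimes> Lt d)" using Suc by simp
  have c: "Rt d \<in> carrier G" "Lt d \<in> carrier G" "b \<in> carrier G"
    using d Rt_c Lt_c b B_carrier by auto
  have c2: "x (int r - int d) \<in> carrier G" "x (- int r + int d) \<in> carrier G"
    using xc[of "int r - int d"] xc[of "- int r + int d"] d by simp_all
  have eq: "Rt (Suc d) \<otimes> b \<otimes> Lt (Suc d) = x (int r - int d) \<otimes> (Rt d \<otimes> b \<otimes> Lt d) \<otimes> x (- int r + int d)"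
    using d c c2 by (simp add: Rt_Suc Lt_Suc m_assoc)
  show ?case unfolding eq using wrap[OF xside_R[OF d] xside_L[OF d] IH] by simp
qed

lemma RF2_right: assumes b: "b \<in> C" "b \<noteq> \<one>" shows "x (int r) \<otimes> b \<otimes> inv (x (int r)) \<notin> C"
proof
  let ?a = "x (int r)"
  let ?H = "G\<lparr>carrier := A\<rparr>"
  assume c: "?a \<otimes> b \<otimes> inv ?a \<in> C"
  let ?c = "?a \<otimes> b \<otimes> inv ?a"
  have aA: "?a \<in> A" using xside[of "int r"] by (simp add: fac_def)
  have ac: "?a \<in> carrier G" using xc[of "int r"] by simp
  have bc: "b \<in> carrier G" using b C_carrier by blast
  have cc: "?c \<in> carrier G" using ac bc by simp
  have c1: "?c \<noteq> \<one>"
  proof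
    assume "?c = \<one>"
    then have "?a \<otimes> b = ?a" using ac bc by (metis inv_closed m_closed r_one inv_equality inv_inv)
    then show False using b ac bc by (metis l_cancel_one' )
  qed
  define ps where "ps = [(True, b), (False, inv ?c)]"
  have icC: "inv ?c \<in> C" using c subgroup.m_inv_closed[OF sgC] by blast
  have ic1: "inv ?c \<noteq> \<one>" using c1 cc by (metis inv_inv one_closed inv_one)
  have "rf_word ?H ?a ps = (?a \<otimes> b) \<otimes> ((inv ?a \<otimes> inv ?c) \<otimes> \<one>)"
    unfolding rf_word_def ps_def using aA by (simp add: m_inv_consistent[OF sgA])
  also have "\<dots> = ?c \<otimes> inv ?c" using ac bc cc by (simp add: m_assoc[symmetric])
  also have "\<dots> = \<one>" using cc by simp
  finally have rf1: "rf_word ?H ?a ps = \<one>\<^bsub>?H\<^esub>" by simp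
  have cyc: "\<forall>i<length ps. fst (ps!i) \<noteq> fst (ps!((i+1) mod length ps)) \<longrightarrow> snd (ps!i) \<noteq> \<one>\<^bsub>?H\<^esub>"
    unfolding ps_def using b ic1 by (auto simp: less_Suc_eq numeral_2_eq_2)
  have "enat (length (filter fst ps)) < 2" "enat (length (filter (\<lambda>p. \<not> fst p) ps)) < 2"
    unfolding ps_def by (simp_all add: numeral_eq_enat)
  moreover have "\<forall>p\<in>set ps. snd p \<in> C" unfolding ps_def using b icC by auto
  ultimately have "rf_word ?H ?a ps \<noteq> \<one>\<^bsub>?H\<^esub>" using right cyc unfolding n_RF_def ps_def by auto
  then show False using rf1 by simp
qed


lemma conj_ne1: assumes "a \<in> carrier G" "b \<in> carrier G" "b \<noteq> \<one>" shows "a \<otimes> b \<otimes> inv a \<noteq> \<one>"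
proof
  assume "a \<otimes> b \<otimes> inv a = \<one>"
  then have "a \<otimes> b = a" using assms by (metis inv_closed m_closed r_one inv_equality inv_inv)
  then show False using assms by (metis l_cancel_one')
qed

lemma RF2_left: assumes b: "b \<in> C" "b \<noteq> \<one>" shows "inv (x (- int r)) \<otimes> b \<otimes> x (- int r) \<notin> C"
proof
  let ?a = "x (- int r)"
  let ?H = "G\<lparr>carrier := A\<rparr>"
  assume c: "inv ?a \<otimes> b \<otimes> ?a \<in> C"
  let ?c = "inv ?a \<otimes> b \<otimes> ?a"
  have aA: "?a \<in> A" using xside[of "- int r"] by (simp add: fac_def)
  have ac: "?a \<in> carrier G" using xc[of "- int r"] by simp
  have bc: "b \<in> carrier G" using b C_carrier by blast
  have cc: "?c \<in> carrier G" using ac bc by simp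
  have c1: "?c \<noteq> \<one>" using conj_ne1[of "inv ?a" b] ac bc b by simp
  define ps where "ps = [(False, b), (True, inv ?c)]"
  have icC: "inv ?c \<in> C" using c subgroup.m_inv_closed[OF sgC] by blast
  have ic1: "inv ?c \<noteq> \<one>" using c1 cc by (metis inv_inv one_closed inv_one)
  have "rf_word ?H ?a ps = (inv ?a \<otimes> b) \<otimes> ((?a \<otimes> inv ?c) \<otimes> \<one>)"
    unfolding rf_word_def ps_def using aA by (simp add: m_inv_consistent[OF sgA])
  also have "\<dots> = ?c \<otimes> inv ?c" using ac bc cc by (simp add: m_assoc[symmetric])
  also have "\<dots> = \<one>" using cc by simp
  finally have rf1: "rf_word ?H ?a ps = \<one>\<^bsub>?H\<^esub>" by simp
  have cyc: "\<forall>i<length ps. fst (ps!i) \<noteq> fst (ps!((i+1) mod length ps)) \<longrightarrow> snd (ps!i) \<noteq> \<one>\<^bsub>?H\<^esub>"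
    unfolding ps_def using b ic1 by (auto simp: less_Suc_eq numeral_2_eq_2)
  have "enat (length (filter fst ps)) < 2" "enat (length (filter (\<lambda>p. \<not> fst p) ps)) < 2"
    unfolding ps_def by (simp_all add: numeral_eq_enat)
  moreover have "\<forall>p\<in>set ps. snd p \<in> C" unfolding ps_def using b icC by auto
  ultimately have "rf_word ?H ?a ps \<noteq> \<one>\<^bsub>?H\<^esub>" using left cyc unfolding n_RF_def ps_def by auto
  then show False using rf1 by simp
qed

lemma Rt1: "Rt 1 = x (int r)"
  using Rt_Suc[of 0] r1 xc[of "int r"] by (simp add: Rt0)

lemma Lt1: "Lt 1 = x (- int r)"
  using Lt_Suc[of 0] r1 xc[of "- int r"] by (simp add: Lt0)

lemma JTF: assumes b: "b \<in> B" "b \<noteq> \<one>"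
  shows "1 \<le> d \<Longrightarrow> d \<le> r \<Longrightarrow> RW (odd d) (odd d) (Rt d \<otimes> b \<otimes> inv (Rt d))"
proof (induction d)
  case 0 then show ?case by simp
next
  case (Suc d)
  have bc: "b \<in> carrier G" using b B_carrier by blast
  show ?case
  proof (cases "d = 0")
    case True
    have xr: "x (int r) \<in> fac True - C" using xside[of "int r"] by simp
    have "RW True True (x (int r) \<otimes> b \<otimes> inv (x (int r)))"
    proof (cases "b \<in> C")
      case True
      have m1: "x (int r) \<in> fac True" "b \<in> fac True" "inv (x (int r)) \<in> fac True"
        using xr True C_fac fac_inv[OF xr] by auto
      have "x (int r) \<otimes> b \<otimes> inv (x (int r)) \<in> fac True"
        by (rule subgroup.m_closed[OF fac_sg subgroup.m_closed[OF fac_sg m1(1) m1(2)] m1(3)])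
      then show ?thesis using RF2_right[OF True b(2)] RW_single by blast
    next
      case False
      then have "RW False False b" using b RW_single[of b False] by (simp add: fac_def)
      then show ?thesis using wrap'[OF xr fac_inv[OF xr]] by simp
    qed
    then show ?thesis using True by (simp add: Rt1[unfolded One_nat_def])
  next
    case False
    then have d: "d < r" "1 \<le> d" using Suc by auto
    have IH: "RW (\<not> even d) (\<not> even d) (Rt d \<otimes> b \<otimes> inv (Rt d))" using Suc d by simp
    have c: "Rt d \<in> carrier G" "x (int r - int d) \<in> carrier G"
      using Rt_c xc[of "int r - int d"] d by simp_all
    have eq: "Rt (Suc d) \<otimes> b \<otimes> inv (Rt (Suc d)) = x (int r - int d) \<otimes> (Rt d \<otimes> b \<otimes> inv (Rt d)) \<otimes> inv (x (int r - int d))"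
      using d c bc by (simp add: Rt_Suc m_assoc inv_mult_group)
    show ?thesis unfolding eq using wrap'[OF xside_R[OF d(1)] fac_inv[OF xside_R[OF d(1)]] IH] by simp
  qed
qed

lemma JFT: assumes b: "b \<in> B" "b \<noteq> \<one>"
  shows "1 \<le> d \<Longrightarrow> d \<le> r \<Longrightarrow> RW (odd d) (odd d) (inv (Lt d) \<otimes> b \<otimes> Lt d)"
proof (induction d)
  case 0 then show ?case by simp
next
  case (Suc d)
  have bc: "b \<in> carrier G" using b B_carrier by blast
  show ?case
  proof (cases "d = 0")
    case True
    have xr: "x (- int r) \<in> fac True - C" using xside[of "- int r"] by simp
    have "RW True True (inv (x (- int r)) \<otimes> b \<otimes> x (- int r))"
    proof (cases "b \<in> C")
      case True
      have m1: "inv (x (- int r)) \<in> fac True" "b \<in> fac True" "x (- int r) \<in> fac True"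
        using xr True C_fac fac_inv[OF xr] by auto
      have "inv (x (- int r)) \<otimes> b \<otimes> x (- int r) \<in> fac True"
        by (rule subgroup.m_closed[OF fac_sg subgroup.m_closed[OF fac_sg m1(1) m1(2)] m1(3)])
      then show ?thesis using RF2_left[OF True b(2)] RW_single by blast
    next
      case False
      then have "RW False False b" using b RW_single[of b False] by (simp add: fac_def)
      then show ?thesis using wrap'[OF fac_inv[OF xr] xr] by simp
    qed
    then show ?thesis using True by (simp add: Lt1[unfolded One_nat_def])
  next
    case False
    then have d: "d < r" "1 \<le> d" using Suc by auto
    have IH: "RW (\<not> even d) (\<not> even d) (inv (Lt d) \<otimes> b \<otimes> Lt d)" using Suc d by simp
    have c: "Lt d \<in> carrier G" "x (- int r + int d) \<in> carrier G"
      using Lt_c xc[of "- int r + int d"] d by simp_all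
    have eq: "inv (Lt (Suc d)) \<otimes> b \<otimes> Lt (Suc d) = inv (x (- int r + int d)) \<otimes> (inv (Lt d) \<otimes> b \<otimes> Lt d) \<otimes> x (- int r + int d)"
      using d c bc by (simp add: Lt_Suc m_assoc inv_mult_group)
    show ?thesis unfolding eq using wrap'[OF fac_inv[OF xside_L[OF d(1)]] xside_L[OF d(1)] IH] by simp
  qed
qed

definition P :: "bool \<Rightarrow> 'a" where "P s = (if s then Lt r else inv (Rt r))"
definition Q :: "bool \<Rightarrow> 'a" where "Q s = (if s then Rt r else inv (Lt r))"
definition yv :: "bool \<Rightarrow> 'a" where "yv s = (if s then x 0 else inv (x 0))"
definition gg :: 'a where "gg = mprod G (map x [- int r .. int r])"

lemma P_c: "P s \<in> carrier G" unfolding P_def using Lt_c Rt_c by auto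
lemma Q_c: "Q s \<in> carrier G" unfolding Q_def using Lt_c Rt_c by auto
lemma x0c: "x 0 \<in> carrier G" using xc[of 0] by simp
lemma yv_c: "yv s \<in> carrier G" unfolding yv_def using x0c by auto

lemma junction: assumes b: "b \<in> B" and ne: "e \<noteq> e' \<Longrightarrow> b \<noteq> \<one>"
  shows "RW (odd r) (odd r) (Q e \<otimes> b \<otimes> P e') \<or> (Q e \<otimes> b \<otimes> P e' \<in> C \<and> e = e')"
proof (cases e; cases e')
  assume "e" "e'"
  then show ?thesis using JTT[OF b, of r] by (auto simp: P_def Q_def)
next
  assume "e" "\<not> e'"
  then show ?thesis using JTF[OF b ne, of r] r1 by (auto simp: P_def Q_def)
next
  assume "\<not> e" "e'"
  then show ?thesis using JFT[OF b ne, of r] r1 by (auto simp: P_def Q_def)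
next
  assume "\<not> e" "\<not> e'"
  have bc: "b \<in> carrier G" using b B_carrier by blast
  have ib: "inv b \<in> B" using b subgroup.m_inv_closed[OF sgB] by blast
  have eq: "inv (Rt r \<otimes> inv b \<otimes> Lt r) = inv (Lt r) \<otimes> b \<otimes> inv (Rt r)"
    using bc Rt_c Lt_c by (simp add: inv_mult_group m_assoc)
  have "Rt r \<otimes> inv b \<otimes> Lt r \<in> C \<or> RW (odd r) (odd r) (Rt r \<otimes> inv b \<otimes> Lt r)" using JTT[OF ib, of r] by simp
  then have "inv (Lt r) \<otimes> b \<otimes> inv (Rt r) \<in> C \<or> RW (odd r) (odd r) (inv (Lt r) \<otimes> b \<otimes> inv (Rt r))"
    using RW_inv subgroup.m_inv_closed[OF sgC] unfolding eq[symmetric] by blast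
  then show ?thesis using \<open>\<not> e\<close> \<open>\<not> e'\<close> by (auto simp: P_def Q_def)
qed

lemma gg_split: "gg = Lt r \<otimes> x 0 \<otimes> Rt r"
proof -
  have "[- int r .. int r] = [- int r .. - 1] @ 0 # [1 .. int r]"
    using upto_split3[of "- int r" 0 "int r"] by simp
  moreover have "Lt r = mprod G (map x [- int r .. - 1])" unfolding Lt_def by simp
  moreover have "Rt r = mprod G (map x [1 .. int r])" unfolding Rt_def by simp
  moreover have "set (map x [- int r .. - 1]) \<subseteq> carrier G" by (auto intro: xc)
  moreover have "set (map x (0 # [1 .. int r])) \<subseteq> carrier G" by (auto intro: xc)
  ultimately show ?thesis unfolding gg_def using x0c Lt_c Rt_c by (simp add: mprod_append m_assoc)
qed

lemma gg_c: "gg \<in> carrier G" unfolding gg_split using x0c Lt_c Rt_c by simp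

lemma pw: "(if s then gg else inv gg) = P s \<otimes> yv s \<otimes> Q s"
  unfolding gg_split P_def Q_def yv_def using x0c Lt_c Rt_c by (simp add: inv_mult_group m_assoc)

end


context lem_ctx begin

definition Hyp :: "(bool \<times> 'a) list \<Rightarrow> bool" where
  "Hyp ps \<longleftrightarrow> ps \<noteq> [] \<and> (\<forall>p\<in>set ps. snd p \<in> B) \<and>
        (\<forall>i<length ps. fst (ps!i) \<noteq> fst (ps!((i+1) mod length ps)) \<longrightarrow> snd (ps!i) \<noteq> \<one>) \<and>
        enat (length (filter fst ps)) < n \<and>
        enat (length (filter (\<lambda>p. \<not> fst p) ps)) < n"

definition Jf :: "(bool \<times> 'a) list \<Rightarrow> nat \<Rightarrow> 'a" where
  "Jf ps l = Q (fst (ps!l)) \<otimes> snd (ps!l) \<otimes> P (fst (ps!(Suc l mod length ps)))"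

lemma Hyp_snd: "Hyp ps \<Longrightarrow> i < length ps \<Longrightarrow> snd (ps!i) \<in> B"
  unfolding Hyp_def using nth_mem by blast

lemma Hyp_sndc: "Hyp ps \<Longrightarrow> i < length ps \<Longrightarrow> snd (ps!i) \<in> carrier G"
  using Hyp_snd B_carrier by blast

lemma Jf_c: "Hyp ps \<Longrightarrow> i < length ps \<Longrightarrow> Jf ps i \<in> carrier G"
  unfolding Jf_def using Hyp_sndc P_c Q_c by simp

lemma tele_main: assumes h: "Hyp ps" and rf: "rf_word G gg ps = \<one>"
  shows "mprod G (map (\<lambda>i. yv (fst (ps!i)) \<otimes> Jf ps i) [0..<length ps]) = \<one>"
proof -
  define k where "k = length ps"
  have k0: "0 < k" using h unfolding Hyp_def k_def by simp
  define p where "p i = P (fst (ps ! (i mod k)))" for i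
  define u where "u i = yv (fst (ps!i)) \<otimes> Q (fst (ps!i)) \<otimes> snd (ps!i)" for i
  have bc: "\<And>i. i < k \<Longrightarrow> snd (ps!i) \<in> carrier G" using Hyp_sndc[OF h] k_def by simp
  have pc: "\<And>i. p i \<in> carrier G" unfolding p_def using P_c by simp
  have uc: "\<And>i. i < k \<Longrightarrow> u i \<in> carrier G" unfolding u_def using bc yv_c Q_c by simp
  define h' where "h' = (\<lambda>(e, d). (if e then gg else inv gg) \<otimes> d)"
  have "map h' ps = map (\<lambda>i. h' (ps ! i)) [0..<k]" unfolding k_def by (rule nth_equalityI) auto
  also have "\<dots> = map (\<lambda>i. p i \<otimes> u i) [0..<k]"
  proof (rule map_cong[OF refl])
    fix i assume "i \<in> set [0..<k]"
    then have i: "i < k" by simp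
    have "h' (ps ! i) = (if fst (ps!i) then gg else inv gg) \<otimes> snd (ps!i)"
      unfolding h'_def by (simp add: case_prod_beta)
    also have "\<dots> = P (fst (ps!i)) \<otimes> yv (fst (ps!i)) \<otimes> Q (fst (ps!i)) \<otimes> snd (ps!i)" by (simp only: pw)
    also have "\<dots> = p i \<otimes> u i" unfolding p_def u_def using i bc[OF i] P_c yv_c Q_c by (simp add: m_assoc)
    finally show "h' (ps ! i) = p i \<otimes> u i" .
  qed
  finally have "rf_word G gg ps = mprod G (map (\<lambda>i. p i \<otimes> u i) [0..<k])"
    unfolding rf_word_def h'_def by simp
  then have M1: "mprod G (map (\<lambda>i. p i \<otimes> u i) [0..<k]) = \<one>" using rf by simp
  have "mprod G (map (\<lambda>i. p i \<otimes> u i) [0..<k]) \<otimes> p k = p 0 \<otimes> mprod G (map (\<lambda>i. u i \<otimes> p (Suc i)) [0..<k])"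
    by (rule tele) (use pc uc in auto)
  moreover have "p k = p 0" unfolding p_def by simp
  ultimately have "p 0 \<otimes> mprod G (map (\<lambda>i. u i \<otimes> p (Suc i)) [0..<k]) = p 0 \<otimes> \<one>"
    using M1 pc by simp
  moreover have "set (map (\<lambda>i. u i \<otimes> p (Suc i)) [0..<k]) \<subseteq> carrier G" using uc pc by auto
  ultimately have M2: "mprod G (map (\<lambda>i. u i \<otimes> p (Suc i)) [0..<k]) = \<one>" using pc by simp
  have mq: "map (\<lambda>i. u i \<otimes> p (Suc i)) [0..<k] = map (\<lambda>i. yv (fst (ps!i)) \<otimes> Jf ps i) [0..<k]"
  proof (rule map_cong[OF refl])
    fix i assume "i \<in> set [0..<k]"
    then have i: "i < k" by simp
    show "u i \<otimes> p (Suc i) = yv (fst (ps!i)) \<otimes> Jf ps i"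
      unfolding u_def p_def Jf_def k_def[symmetric] using bc[OF i] P_c yv_c Q_c by (simp add: m_assoc)
  qed
  show ?thesis using M2[unfolded mq] unfolding k_def .
qed

lemma jun_ps: assumes h: "Hyp ps" and i: "i < length ps"
  shows "RW (odd r) (odd r) (Jf ps i) \<or> (Jf ps i \<in> C \<and> fst (ps!i) = fst (ps!(Suc i mod length ps)))"
proof -
  have "fst (ps!i) \<noteq> fst (ps!(Suc i mod length ps)) \<Longrightarrow> snd (ps!i) \<noteq> \<one>"
    using h i unfolding Hyp_def by simp
  from junction[where b="snd (ps!i)" and e="fst (ps!i)" and e'="fst (ps!(Suc i mod length ps))", OF Hyp_snd[OF h i] this]
  show ?thesis unfolding Jf_def .
qed

lemma window: assumes h: "Hyp ps" and ji: "j < i" "i \<le> length ps"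
  and eq: "\<forall>l. j \<le> l \<longrightarrow> l < i \<longrightarrow> fst (ps!l) = fst (ps!j)"
  shows "enat (i - j) < n"
proof -
  define v where "v = fst (ps!j)"
  have sub: "{j..<i} \<subseteq> {t. t < length ps \<and> fst (ps!t) = v}"
  proof
    fix t assume "t \<in> {j..<i}"
    then have t: "j \<le> t" "t < i" by auto
    then have "fst (ps!t) = v" using eq unfolding v_def by blast
    moreover have "t < length ps" using t ji(2) by simp
    ultimately show "t \<in> {t. t < length ps \<and> fst (ps!t) = v}" by simp
  qed
  have "i - j \<le> card {t. t < length ps \<and> fst (ps!t) = v}"
    using card_mono[OF _ sub] by simp
  moreover have "card {t. t < length ps \<and> fst (ps!t) = v} = length (filter (\<lambda>p. fst p = v) ps)"
    by (simp add: length_filter_conv_card)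
  ultimately have le: "i - j \<le> length (filter (\<lambda>p. fst p = v) ps)" by simp
  show ?thesis
  proof (cases v)
    case True
    then have "filter (\<lambda>p. fst p = v) ps = filter fst ps" by simp
    then have "enat (i - j) \<le> enat (length (filter fst ps))" using le by simp
    then show ?thesis using h unfolding Hyp_def by (meson order.strict_trans1)
  next
    case False
    then have "filter (\<lambda>p. fst p = v) ps = filter (\<lambda>p. \<not> fst p) ps" by simp
    then have "enat (i - j) \<le> enat (length (filter (\<lambda>p. \<not> fst p) ps))" using le by simp
    then show ?thesis using h unfolding Hyp_def by (meson order.strict_trans1)
  qed
qed

lemma RTFP_x0: "RTFP n (x 0)"
  using mid unfolding n_RTF_def RTFP_def by simp

lemma RTFP_yv: "RTFP n (yv s)"
  unfolding yv_def using RTFP_x0 RTFP_inv[OF x0c RTFP_x0] by simp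

lemma yv_fac: "yv s \<in> fac (even r) - C"
proof -
  have "x 0 \<in> fac (even (0 - int r)) - C" using xside[of 0] by simp
  then have "x 0 \<in> fac (even r) - C" by simp
  then show ?thesis unfolding yv_def using fac_inv[of "x 0" "even r"] by simp
qed

end


context lem_ctx begin

lemma B0: assumes h: "Hyp ps" and lst: "RW (odd r) (odd r) (Jf ps (length ps - 1))"
  shows "rf_word G gg ps \<noteq> \<one>"
proof
  assume rf: "rf_word G gg ps = \<one>"
  define k where "k = length ps"
  have k0: "0 < k" using h unfolding Hyp_def k_def by simp
  have M: "mprod G (map (\<lambda>i. yv (fst (ps!i)) \<otimes> Jf ps i) [0..<k]) = \<one>"
    using tele_main[OF h rf] unfolding k_def .
  have "mprod G (map (\<lambda>i. yv (fst (ps!i)) \<otimes> Jf ps i) [0..<k]) \<noteq> \<one>"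
  proof (rule core[where k=k and e="\<lambda>i. fst (ps!i)" and J="Jf ps" and y=yv and sx="even r" and n=n])
    show "0 < k" by (rule k0)
    show "\<forall>i<k. Jf ps i \<in> carrier G" using Jf_c[OF h] k_def by simp
    show "\<forall>s. yv s \<in> fac (even r) - C" using yv_fac by blast
    show "\<forall>s. RTFP n (yv s)" using RTFP_yv by blast
    show "\<forall>i<k. RW (\<not> even r) (\<not> even r) (Jf ps i) \<or> (Jf ps i \<in> C \<and> (Suc i < k \<longrightarrow> fst (ps ! Suc i) = fst (ps ! i)))"
    proof (intro allI impI)
      fix i assume i: "i < k"
      have "RW (odd r) (odd r) (Jf ps i) \<or> (Jf ps i \<in> C \<and> fst (ps!i) = fst (ps!(Suc i mod k)))"
        using jun_ps[OF h] i k_def by simp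
      moreover have "Suc i < k \<Longrightarrow> Suc i mod k = Suc i" by simp
      ultimately show "RW (\<not> even r) (\<not> even r) (Jf ps i) \<or> (Jf ps i \<in> C \<and> (Suc i < k \<longrightarrow> fst (ps ! Suc i) = fst (ps ! i)))"
        by auto
    qed
    show "RW (\<not> even r) (\<not> even r) (Jf ps (k - 1))" using lst k_def by simp
    show "\<forall>j i. j < i \<longrightarrow> i \<le> k \<longrightarrow> (\<forall>l. j \<le> l \<longrightarrow> l < i \<longrightarrow> fst (ps!l) = fst (ps!j)) \<longrightarrow> enat (i - j) < n"
      using window[OF h] k_def by blast
  qed
  then show False using M by simp
qed

lemma A0: assumes h: "Hyp ps" and no: "\<forall>i<length ps. \<not> RW (odd r) (odd r) (Jf ps i)"
  shows "rf_word G gg ps \<noteq> \<one>"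
proof
  assume rf: "rf_word G gg ps = \<one>"
  define k where "k = length ps"
  have k0: "0 < k" using h unfolding Hyp_def k_def by simp
  have M: "mprod G (map (\<lambda>i. yv (fst (ps!i)) \<otimes> Jf ps i) [0..<k]) = \<one>"
    using tele_main[OF h rf] unfolding k_def .
  have JC: "Jf ps i \<in> C \<and> fst (ps!i) = fst (ps!(Suc i mod k))" if i: "i < k" for i
  proof -
    have "RW (odd r) (odd r) (Jf ps i) \<or> (Jf ps i \<in> C \<and> fst (ps!i) = fst (ps!(Suc i mod length ps)))"
      using jun_ps[OF h] i k_def by blast
    moreover have "\<not> RW (odd r) (odd r) (Jf ps i)" using no i k_def by blast
    ultimately show ?thesis using k_def by blast
  qed
  have all: "\<And>i. i < k \<Longrightarrow> fst (ps!i) = fst (ps!0)"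
  proof -
    fix i show "i < k \<Longrightarrow> fst (ps!i) = fst (ps!0)"
    proof (induction i)
      case (Suc i)
      then have "i < k" by simp
      then have "fst (ps!i) = fst (ps!(Suc i mod k))" using JC by blast
      moreover have "Suc i mod k = Suc i" using Suc.prems by simp
      ultimately have "fst (ps!(Suc i)) = fst (ps!i)" by simp
      then show ?case using Suc.IH \<open>i < k\<close> by simp
    qed simp
  qed
  have mq: "map (\<lambda>i. yv (fst (ps!i)) \<otimes> Jf ps i) [0..<k] = map (\<lambda>d. yv (fst (ps!0)) \<otimes> d) (map (Jf ps) [0..<k])"
    unfolding map_map comp_def
  proof (rule map_cong[OF refl])
    fix i assume "i \<in> set [0..<k]"
    then have "i < k" by simp
    then have "fst (ps!i) = fst (ps!0)" by (rule all)
    then show "yv (fst (ps!i)) \<otimes> Jf ps i = yv (fst (ps!0)) \<otimes> Jf ps i" by simp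
  qed
  have "\<forall>l. 0 \<le> l \<longrightarrow> l < k \<longrightarrow> fst (ps!l) = fst (ps!0)" using all by blast
  then have "enat (k - 0) < n" using window[OF h k0] k_def by simp
  then have e1: "enat (length (map (Jf ps) [0..<k])) < n" by simp
  moreover have e2: "set (map (Jf ps) [0..<k]) \<subseteq> C"
  proof
    fix c assume "c \<in> set (map (Jf ps) [0..<k])"
    then obtain i where "i < k" "c = Jf ps i" by auto
    then show "c \<in> C" using JC by blast
  qed
  moreover have e3: "map (Jf ps) [0..<k] \<noteq> []" using k0 by simp
  moreover have rr: "\<And>ds. ds \<noteq> [] \<Longrightarrow> set ds \<subseteq> C \<Longrightarrow> enat (length ds) < n \<Longrightarrow> mprod G (map (\<lambda>d. yv (fst (ps!0)) \<otimes> d) ds) \<noteq> \<one>"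
    using RTFP_yv unfolding RTFP_def by blast
  ultimately have "mprod G (map (\<lambda>d. yv (fst (ps!0)) \<otimes> d) (map (Jf ps) [0..<k])) \<noteq> \<one>"
    using rr[OF e3 e2 e1] by blast
  then show False using M[unfolded mq] by simp
qed

lemma length_filter_rotate: "length (filter Pr (rotate s xs)) = length (filter Pr xs)"
proof -
  let ?m = "s mod length xs"
  have "length (filter Pr xs) = length (filter Pr (take ?m xs @ drop ?m xs))" by simp
  then show ?thesis unfolding rotate_drop_take by (simp only: filter_append length_append add.commute)
qed

lemma Hyp_rot: assumes h: "Hyp ps" shows "Hyp (rotate s ps)"
proof -
  define k where "k = length ps"
  have k0: "0 < k" using h unfolding Hyp_def k_def by simp
  have cyc: "\<And>i. i < k \<Longrightarrow> fst (ps!i) \<noteq> fst (ps!((i+1) mod k)) \<Longrightarrow> snd (ps!i) \<noteq> \<one>"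
    using h unfolding Hyp_def k_def by blast
  have "\<forall>i<length (rotate s ps). fst (rotate s ps!i) \<noteq> fst (rotate s ps!((i+1) mod length (rotate s ps))) \<longrightarrow> snd (rotate s ps!i) \<noteq> \<one>"
  proof (intro allI impI)
    fix i assume i: "i < length (rotate s ps)"
      and ne: "fst (rotate s ps!i) \<noteq> fst (rotate s ps!((i+1) mod length (rotate s ps)))"
    have ik: "i < k" using i k_def by simp
    define m where "m = (s + i) mod k"
    have mk: "m < k" using k0 m_def by simp
    have e1: "rotate s ps ! i = ps ! m" unfolding m_def k_def using nth_rotate ik k_def by simp
    have "(s + (i + 1) mod k) mod k = (m + 1) mod k" unfolding m_def by (simp add: mod_simps)
    then have e2: "rotate s ps ! ((i+1) mod length (rotate s ps)) = ps ! ((m+1) mod k)"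
      using nth_rotate[of "(i+1) mod k" ps s] k0 k_def by simp
    show "snd (rotate s ps!i) \<noteq> \<one>" using cyc[OF mk] ne unfolding e1 e2 by simp
  qed
  then show ?thesis using h unfolding Hyp_def by (simp add: length_filter_rotate)
qed

lemma rf_rot: assumes h: "Hyp ps" and rf: "rf_word G gg ps = \<one>" shows "rf_word G gg (rotate s ps) = \<one>"
proof -
  define h' where "h' = (\<lambda>(e, d). (if e then gg else inv gg) \<otimes> d)"
  have "set (map h' ps) \<subseteq> carrier G"
  proof
    fix z assume "z \<in> set (map h' ps)"
    then obtain e d where ed: "(e, d) \<in> set ps" "z = h' (e, d)" by auto
    then have "d \<in> B" using h unfolding Hyp_def by force
    then have "d \<in> carrier G" using B_carrier by blast
    then show "z \<in> carrier G" unfolding ed(2) h'_def using gg_c by simp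
  qed
  moreover have "mprod G (map h' ps) = \<one>" using rf unfolding rf_word_def h'_def .
  ultimately have "mprod G (rotate s (map h' ps)) = \<one>" by (rule mprod_rotate)
  then show ?thesis unfolding rf_word_def h'_def rotate_map .
qed

lemma Jf_rot: assumes i: "i < length ps" shows "Jf (rotate (Suc i) ps) (length ps - 1) = Jf ps i"
proof -
  define k where "k = length ps"
  have k0: "0 < k" using i k_def by linarith
  have a: "rotate (Suc i) ps ! (k - 1) = ps ! i"
  proof -
    have "k - 1 < length ps" using k0 k_def by simp
    from nth_rotate[OF this, of "Suc i"]
    have "rotate (Suc i) ps ! (k - 1) = ps ! ((Suc i + (k - 1)) mod k)" unfolding k_def .
    also have "(Suc i + (k - 1)) mod k = i" using k0 i k_def by simp
    finally show ?thesis .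
  qed
  have b: "rotate (Suc i) ps ! (Suc (k - 1) mod k) = ps ! (Suc i mod k)"
  proof -
    have "Suc (k - 1) mod k = 0" using k0 by simp
    moreover have "0 < length ps" using k0 k_def by simp
    from nth_rotate[OF this, of "Suc i"]
    have "rotate (Suc i) ps ! 0 = ps ! (Suc i mod k)" unfolding k_def by simp
    ultimately show ?thesis by simp
  qed
  show ?thesis unfolding Jf_def length_rotate k_def[symmetric] a b ..
qed

lemma main_rf: assumes h: "Hyp ps" shows "rf_word G gg ps \<noteq> \<one>"
proof (cases "\<exists>i<length ps. RW (odd r) (odd r) (Jf ps i)")
  case True
  then obtain i where i: "i < length ps" "RW (odd r) (odd r) (Jf ps i)" by blast
  let ?ps = "rotate (Suc i) ps"
  have "RW (odd r) (odd r) (Jf ?ps (length ?ps - 1))" unfolding length_rotate Jf_rot[OF i(1)] by (rule i(2))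
  then have "rf_word G gg ?ps \<noteq> \<one>" by (rule B0[OF Hyp_rot[OF h]])
  then show ?thesis using rf_rot[OF h] by blast
next
  case False
  then show ?thesis using A0[OF h] by blast
qed

lemma final: "n_RF G n B gg"
proof -
  have notB: "gg \<notin> B"
  proof
    assume gB: "gg \<in> B"
    define ps where "ps = [(True, inv gg)]"
    have igB: "inv gg \<in> B" using gB subgroup.m_inv_closed[OF sgB] by blast
    have "enat 1 < 2" by (simp add: numeral_eq_enat)
    then have n1: "enat 1 < n" using n2 by (rule less_le_trans)
    have "enat 0 < enat 1" by simp
    then have n0: "enat 0 < n" using n1 by (rule less_trans)
    have "Hyp ps" unfolding Hyp_def ps_def using igB n1 n0 by simp
    moreover have "rf_word G gg ps = \<one>" unfolding rf_word_def ps_def using gg_c by simp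
    ultimately show False using main_rf by blast
  qed
  show ?thesis unfolding n_RF_def using gg_c notB main_rf unfolding Hyp_def by blast
qed

end


theorem lemma5p25:
  fixes G :: "('a, 'b) monoid_scheme" and A B C :: "'a set"
    and x :: "int \<Rightarrow> 'a" and r :: nat and n :: enat
  assumes afp: "amalgamated_free_product G A B C"
    and r1: "r \<ge> 1"
    and xA: "\<And>i. - int r \<le> i \<Longrightarrow> i \<le> int r \<Longrightarrow> even (i - int r) \<Longrightarrow> x i \<in> A - C"
    and xB: "\<And>i. - int r \<le> i \<Longrightarrow> i \<le> int r \<Longrightarrow> odd (i - int r) \<Longrightarrow> x i \<in> B - C"
    and left: "n_RF (G\<lparr>carrier := A\<rparr>) 2 C (x (- int r))"
    and right: "n_RF (G\<lparr>carrier := A\<rparr>) 2 C (x (int r))"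
    and n2: "2 \<le> n"
    and mid: "n_RTF (G\<lparr>carrier := (if even r then A else B)\<rparr>) n C (x 0)"
  shows "n_RF G n B (mprod G (map x [- int r..int r]))"
proof -
  have grp: "group G" using afp unfolding amalgamated_free_product_def by blast
  interpret L: lem_ctx G A B C x r n
  proof (rule lem_ctx.intro)
    show "afp_ctx G A B C" by (rule afp_ctx.intro[OF grp afp_ctx_axioms.intro[OF afp]])
    show "lem_ctx_axioms G A B C x r n"
      by (rule lem_ctx_axioms.intro) (use r1 xA xB left right n2 mid in auto)
  qed
  show ?thesis using L.final unfolding L.gg_def .
qed

end
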